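(* $\mathcal{S}pl\leq_{K}\mathrm{tr}(\mathcal{E})$ and $\mathcal{S}pl\leq_{K}\mathcal{F}in\times\mathcal{F}in$.
   Context: For an infinite $A\subseteq\omega$, let $S(A)$ be the set of all $\sigma\in2^{<\omega}$ such that $\sigma$ is constant on $A\cap\mathrm{dom}(\sigma)$. The splitting ideal $\mathcal{S}pl$ is the ideal on $2^{<\omega}$ generated by the sets $S(A)$, $A\in[\omega]^{\omega}$. $\mathcal{E}$ is the $\sigma$-ideal on $2^\omega$ generated by closed sets of Lebesgue measure zero. $\mathrm{tr}(\mathcal{E})$ is the ideal on $2^{<\omega}$ consisting of those $A\subseteq2^{<\omega}$ such that $\{x\in2^{\omega}:x|_{n}\in A$ for infinitely many $n\}\in\mathcal{E}$. $\mathcal{F}in\times\mathcal{F}in$ is the ideal on $\omega\times\omega$ of sets $A$ such that for all but finitely many $n$ the set $\{m:(n,m)\in A\}$ is finite. For ideals $\mathcal{J}_0,\mathcal{J}_1$ on countable sets $X_0,X_1$, $\mathcal{J}_{0}\leq_{K}\mathcal{J}_{1}$ (Katětov reducibility) means there is a function $\pi:X_1\rightarrow X_0$ with $\pi^{-1}[A]\in\mathcal{J}_{1}$ for every $A\in\mathcal{J}_{0}$. *)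

theory Defs
  imports "HOL-Probability.Probability"
begin

text \<open>Finite binary sequences (elements of 2^{<omega}) are modelled as bool lists;
  dom sigma = {0..<length sigma}. Infinite binary sequences (2^omega) are nat => bool,
  carrying the product topology (bool has the discrete order topology).\<close>

definition S_set :: "nat set \<Rightarrow> bool list set" where
  "S_set A = {\<sigma>. \<exists>c. \<forall>n\<in>A. n < length \<sigma> \<longrightarrow> \<sigma> ! n = c}"

definition Spl :: "bool list set set" where
  "Spl = {X. \<exists>F. finite F \<and> F \<subseteq> {S_set A | A. infinite A} \<and> X \<subseteq> \<Union>F}"

definition cantor_measure :: "(nat \<Rightarrow> bool) measure" where
  "cantor_measure = PiM UNIV (\<lambda>_. measure_pmf (bernoulli_pmf (1/2)))"

definition E_ideal :: "(nat \<Rightarrow> bool) set set" where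
  "E_ideal = {X. \<exists>C :: nat \<Rightarrow> (nat \<Rightarrow> bool) set.
      (\<forall>i. closed (C i) \<and> C i \<in> sets cantor_measure \<and> emeasure cantor_measure (C i) = 0)
      \<and> X \<subseteq> (\<Union>i. C i)}"

definition restr :: "(nat \<Rightarrow> bool) \<Rightarrow> nat \<Rightarrow> bool list" where
  "restr x n = map x [0..<n]"

definition trE :: "bool list set set" where
  "trE = {A. {x. infinite {n. restr x n \<in> A}} \<in> E_ideal}"

definition FinFin :: "(nat \<times> nat) set set" where
  "FinFin = {A. finite {n. infinite {m. (n, m) \<in> A}}}"

definition katetov_le :: "'a set set \<Rightarrow> 'b set set \<Rightarrow> bool" where
  "katetov_le J0 J1 \<longleftrightarrow> (\<exists>\<pi> :: 'b \<Rightarrow> 'a. \<forall>A\<in>J0. \<pi> -` A \<in> J1)"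

end

theory Submission imports Defs begin

lemma pps: "product_prob_space (\<lambda>_::nat. measure_pmf (bernoulli_pmf (1/2)))"
  by (rule product_prob_spaceI) (rule prob_space_measure_pmf)

lemma space_cm: "space cantor_measure = UNIV"
  unfolding cantor_measure_def by (simp add: space_PiM)

lemma cyl_meas: "{x::nat\<Rightarrow>bool. x a = c} \<in> sets cantor_measure"
proof -
  have "(\<lambda>x::nat\<Rightarrow>bool. x a) \<in> measurable cantor_measure (measure_pmf (bernoulli_pmf (1/2)))"
    unfolding cantor_measure_def by (rule measurable_component_singleton) simp
  hence "(\<lambda>x::nat\<Rightarrow>bool. x a) -` {c} \<inter> space cantor_measure \<in> sets cantor_measure"
    by (rule measurable_sets) simp
  thus ?thesis by (simp add: space_cm vimage_def)
qed

lemma C_meas: "{x::nat\<Rightarrow>bool. \<forall>a\<in>A. x a = c} \<in> sets cantor_measure"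
proof -
  have "{x::nat\<Rightarrow>bool. \<forall>a\<in>A. x a = c} = (\<Inter>a\<in>A. {x. x a = c})"
    by auto
  also have "\<dots> \<in> sets cantor_measure"
    by (rule sets.countable_INT'') (auto intro: cyl_meas simp: sets.top[of cantor_measure, unfolded space_cm])
  finally show ?thesis .
qed

lemma C_closed: "closed {x::nat\<Rightarrow>bool. \<forall>a\<in>A. x a = c}"
proof -
  have "{x::nat\<Rightarrow>bool. \<forall>a\<in>A. x a = c} = (\<Inter>a\<in>A. (\<lambda>x. x a) -` {c})" by auto
  moreover have "closed ((\<lambda>x::nat\<Rightarrow>bool. x a) -` {c})" for a
    by (rule closed_vimage) (auto intro: continuous_on_product_coordinates)
  ultimately show ?thesis by auto
qed

lemma cyl_finite:
  assumes "finite J"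
  shows "emeasure cantor_measure {x::nat\<Rightarrow>bool. \<forall>a\<in>J. x a = c} = ennreal ((1/2::real) ^ card J)"
proof -
  interpret P: product_prob_space "\<lambda>_::nat. measure_pmf (bernoulli_pmf (1/2))" UNIV by (rule pps)
  have e: "{x::nat\<Rightarrow>bool. \<forall>a\<in>J. x a = c} = prod_emb UNIV (\<lambda>_. measure_pmf (bernoulli_pmf (1/2))) J (Pi\<^sub>E J (\<lambda>_. {c}))"
    by (auto simp: prod_emb_def space_PiM PiE_iff restrict_def fun_eq_iff)
  have "emeasure cantor_measure {x::nat\<Rightarrow>bool. \<forall>a\<in>J. x a = c} = (\<Prod>i\<in>J. emeasure (measure_pmf (bernoulli_pmf (1/2))) {c})"
    unfolding e cantor_measure_def using assms by (subst P.emeasure_PiM_emb) auto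
  also have "\<dots> = (\<Prod>i\<in>J. ennreal (1/2))"
    by (cases c) (auto simp: emeasure_pmf_single)
  finally show ?thesis by (simp only: prod_constant ennreal_power)
qed

lemma C_null:
  assumes "infinite A"
  shows "emeasure cantor_measure {x::nat\<Rightarrow>bool. \<forall>a\<in>A. x a = c} = 0"
proof -
  let ?C = "{x::nat\<Rightarrow>bool. \<forall>a\<in>A. x a = c}"
  interpret P: product_prob_space "\<lambda>_::nat. measure_pmf (bernoulli_pmf (1/2))" UNIV by (rule pps)
  have le: "measure cantor_measure ?C \<le> (1/2::real) ^ k" for k
  proof -
    obtain J where J: "J \<subseteq> A" "finite J" "card J = k"
      using infinite_arbitrarily_large[OF assms] by blast
    have sub: "?C \<subseteq> {x. \<forall>a\<in>J. x a = c}" using J by auto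
    have "emeasure cantor_measure ?C \<le> emeasure cantor_measure {x. \<forall>a\<in>J. x a = c}"
      by (rule emeasure_mono[OF sub]) (rule C_meas)
    also have "\<dots> = ennreal ((1/2::real) ^ k)" using cyl_finite[OF J(2)] J(3) by simp
    finally have "emeasure cantor_measure ?C \<le> ennreal ((1/2::real) ^ k)" .
    moreover have "emeasure cantor_measure ?C = ennreal (measure cantor_measure ?C)"
      unfolding cantor_measure_def by (rule P.emeasure_eq_measure)
    ultimately show ?thesis by simp
  qed
  have nn: "measure cantor_measure ?C \<ge> 0" by simp
  have "measure cantor_measure ?C = 0"
  proof (rule ccontr)
    assume "measure cantor_measure ?C \<noteq> 0"
    hence "measure cantor_measure ?C > 0" using nn by linarith
    then obtain k where "(1/2::real) ^ k < measure cantor_measure ?C"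
      using real_arch_pow_inv[of "measure cantor_measure ?C" "1/2"] by auto
    with le[of k] show False by simp
  qed
  moreover have "emeasure cantor_measure ?C = ennreal (measure cantor_measure ?C)"
    unfolding cantor_measure_def by (rule P.emeasure_eq_measure)
  ultimately show ?thesis by simp
qed

lemma E_sub: "X \<in> E_ideal \<Longrightarrow> Y \<subseteq> X \<Longrightarrow> Y \<in> E_ideal"
proof -
  assume "X \<in> E_ideal" "Y \<subseteq> X"
  then obtain C :: "nat \<Rightarrow> (nat \<Rightarrow> bool) set" where "\<forall>i. closed (C i) \<and> C i \<in> sets cantor_measure \<and> emeasure cantor_measure (C i) = 0" "X \<subseteq> (\<Union>i. C i)"
    unfolding E_ideal_def by blast
  with \<open>Y \<subseteq> X\<close> show "Y \<in> E_ideal" unfolding E_ideal_def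
    by (intro CollectI exI[of _ C] conjI) auto
qed

lemma E_Un: assumes "X \<in> E_ideal" "Y \<in> E_ideal" shows "X \<union> Y \<in> E_ideal"
proof -
  obtain C1 :: "nat \<Rightarrow> (nat \<Rightarrow> bool) set" where C1: "\<forall>i. closed (C1 i) \<and> C1 i \<in> sets cantor_measure \<and> emeasure cantor_measure (C1 i) = 0" "X \<subseteq> (\<Union>i. C1 i)"
    using assms(1) unfolding E_ideal_def by blast
  obtain C2 :: "nat \<Rightarrow> (nat \<Rightarrow> bool) set" where C2: "\<forall>i. closed (C2 i) \<and> C2 i \<in> sets cantor_measure \<and> emeasure cantor_measure (C2 i) = 0" "Y \<subseteq> (\<Union>i. C2 i)"
    using assms(2) unfolding E_ideal_def by blast
  define C :: "nat \<Rightarrow> (nat \<Rightarrow> bool) set" where "C n = (if even n then C1 (n div 2) else C2 (n div 2))" for n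
  have "\<forall>i. closed (C i) \<and> C i \<in> sets cantor_measure \<and> emeasure cantor_measure (C i) = 0"
  proof
    fix i show "closed (C i) \<and> C i \<in> sets cantor_measure \<and> emeasure cantor_measure (C i) = 0"
      using C1(1) C2(1) by (cases "even i") (simp_all add: C_def)
  qed
  moreover have "X \<union> Y \<subseteq> (\<Union>i. C i)"
  proof
    fix x assume "x \<in> X \<union> Y"
    then show "x \<in> (\<Union>i. C i)"
    proof
      assume "x \<in> X" then obtain i where "x \<in> C1 i" using C1(2) by blast
      hence "x \<in> C (2*i)" by (simp add: C_def)
      thus ?thesis by blast
    next
      assume "x \<in> Y" then obtain i where "x \<in> C2 i" using C2(2) by blast
      hence "x \<in> C (2*i+1)" by (simp add: C_def)
      thus ?thesis by blast
    qed
  qed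
  ultimately show ?thesis unfolding E_ideal_def by (intro CollectI exI[of _ C] conjI)
qed

lemma E_const: assumes "infinite A"
  shows "{x::nat\<Rightarrow>bool. \<exists>c. \<forall>a\<in>A. x a = c} \<in> E_ideal"
proof -
  define C where "C n = {x::nat\<Rightarrow>bool. \<forall>a\<in>A. x a = (n = 0)}" for n :: nat
  have "\<forall>i. closed (C i) \<and> C i \<in> sets cantor_measure \<and> emeasure cantor_measure (C i) = 0"
    unfolding C_def by (intro allI conjI C_closed C_meas C_null[OF assms])
  moreover have "{x::nat\<Rightarrow>bool. \<exists>c. \<forall>a\<in>A. x a = c} \<subseteq> (\<Union>i. C i)"
  proof
    fix x assume "x \<in> {x::nat\<Rightarrow>bool. \<exists>c. \<forall>a\<in>A. x a = c}"
    then obtain c where c: "\<forall>a\<in>A. x a = c" by blast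
    show "x \<in> (\<Union>i. C i)"
    proof (cases c)
      case True then have "x \<in> C 0" using c by (simp add: C_def)
      thus ?thesis by blast
    next
      case False then have "x \<in> C 1" using c by (simp add: C_def)
      thus ?thesis by blast
    qed
  qed
  ultimately show ?thesis unfolding E_ideal_def by (intro CollectI exI[of _ C] conjI)
qed

lemma kat_gen:
  assumes J0: "{} \<in> J" and Jsub: "\<And>X Y. X \<in> J \<Longrightarrow> Y \<subseteq> X \<Longrightarrow> Y \<in> J"
    and JUn: "\<And>X Y. X \<in> J \<Longrightarrow> Y \<in> J \<Longrightarrow> X \<union> Y \<in> J"
    and gen: "\<And>A. infinite A \<Longrightarrow> \<pi> -` S_set A \<in> J"
  shows "katetov_le Spl J"
  unfolding katetov_le_def
proof (intro exI ballI)
  fix X assume "X \<in> Spl"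
  then obtain F where F: "finite F" "F \<subseteq> {S_set A | A. infinite A}" "X \<subseteq> \<Union>F"
    unfolding Spl_def by blast
  have "F \<subseteq> {S_set A | A. infinite A} \<Longrightarrow> \<pi> -` (\<Union>F) \<in> J" using F(1)
  proof (induction F rule: finite_induct)
    case empty then show ?case using J0 by simp
  next
    case (insert Y F)
    then obtain A where "infinite A" "Y = S_set A" by blast
    hence "\<pi> -` Y \<in> J" using gen by simp
    moreover have "\<pi> -` (\<Union>F) \<in> J" using insert by blast
    ultimately show ?case using JUn by (simp add: vimage_Un)
  qed
  with F(2) have "\<pi> -` (\<Union>F) \<in> J" by blast
  moreover have "\<pi> -` X \<subseteq> \<pi> -` (\<Union>F)" using F(3) by blast
  ultimately show "\<pi> -` X \<in> J" using Jsub by blast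
qed

lemma part1: "katetov_le Spl trE"
proof (rule kat_gen[where \<pi> = "\<lambda>x. x"])
  show "{} \<in> trE" unfolding trE_def using E_sub[OF E_const[of "{0::nat..}"], of "{}"]
    by simp
  show "Y \<in> trE" if "X \<in> trE" "Y \<subseteq> X" for X Y
  proof -
    have "{x. infinite {n. restr x n \<in> Y}} \<subseteq> {x. infinite {n. restr x n \<in> X}}"
    proof (intro subsetI CollectI)
      fix x assume "x \<in> {x. infinite {n. restr x n \<in> Y}}"
      hence "infinite {n. restr x n \<in> Y}" by simp
      moreover have "{n. restr x n \<in> Y} \<subseteq> {n. restr x n \<in> X}" using that(2) by blast
      ultimately show "infinite {n. restr x n \<in> X}" using finite_subset by blast
    qed
    thus ?thesis using that(1) E_sub unfolding trE_def by blast
  qed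
  show "X \<union> Y \<in> trE" if "X \<in> trE" "Y \<in> trE" for X Y
  proof -
    have "{x. infinite {n. restr x n \<in> X \<union> Y}} \<subseteq> {x. infinite {n. restr x n \<in> X}} \<union> {x. infinite {n. restr x n \<in> Y}}"
    proof
      fix x assume "x \<in> {x. infinite {n. restr x n \<in> X \<union> Y}}"
      moreover have "{n. restr x n \<in> X \<union> Y} = {n. restr x n \<in> X} \<union> {n. restr x n \<in> Y}" by auto
      ultimately show "x \<in> {x. infinite {n. restr x n \<in> X}} \<union> {x. infinite {n. restr x n \<in> Y}}" by auto
    qed
    thus ?thesis using that E_Un E_sub unfolding trE_def by blast
  qed
  show "(\<lambda>x. x) -` S_set A \<in> trE" if "infinite A" for A
  proof -
    have "{x. infinite {n. restr x n \<in> S_set A}} \<subseteq> {x::nat\<Rightarrow>bool. \<exists>c. \<forall>a\<in>A. x a = c}"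
    proof
      fix x assume "x \<in> {x. infinite {n. restr x n \<in> S_set A}}"
      hence inf: "infinite {n. restr x n \<in> S_set A}" by simp
      obtain a0 where a0: "a0 \<in> A" using \<open>infinite A\<close> by (metis finite.emptyI equals0I)
      have "x a = x a0" if "a \<in> A" for a
      proof -
        obtain n where n: "n > max a a0" "restr x n \<in> S_set A"
          using inf by (metis (mono_tags, lifting) infinite_nat_iff_unbounded mem_Collect_eq)
        then obtain c where "\<forall>b\<in>A. b < n \<longrightarrow> restr x n ! b = c"
          unfolding S_set_def by (auto simp: restr_def)
        with n(1) that a0 show ?thesis by (auto simp: restr_def)
      qed
      thus "x \<in> {x::nat\<Rightarrow>bool. \<exists>c. \<forall>a\<in>A. x a = c}" by blast
    qed
    thus ?thesis using E_sub E_const[OF that] unfolding trE_def by simp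
  qed
qed

lemma part2: "katetov_le Spl FinFin"
proof (rule kat_gen[where \<pi> = "\<lambda>(n,m). map (\<lambda>i. i < n) [0..<m]"])
  show "{} \<in> FinFin" unfolding FinFin_def by simp
  show "Y \<in> FinFin" if "X \<in> FinFin" "Y \<subseteq> X" for X Y
  proof -
    have "{n. infinite {m. (n, m) \<in> Y}} \<subseteq> {n. infinite {m. (n, m) \<in> X}}"
    proof (intro subsetI CollectI)
      fix n assume "n \<in> {n. infinite {m. (n, m) \<in> Y}}"
      hence "infinite {m. (n, m) \<in> Y}" by simp
      moreover have "{m. (n, m) \<in> Y} \<subseteq> {m. (n, m) \<in> X}" using that(2) by blast
      ultimately show "infinite {m. (n, m) \<in> X}" using finite_subset by blast
    qed
    thus ?thesis using that(1) finite_subset unfolding FinFin_def by blast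
  qed
  show "X \<union> Y \<in> FinFin" if "X \<in> FinFin" "Y \<in> FinFin" for X Y
  proof -
    have "{n. infinite {m. (n, m) \<in> X \<union> Y}} \<subseteq> {n. infinite {m. (n, m) \<in> X}} \<union> {n. infinite {m. (n, m) \<in> Y}}"
    proof
      fix n assume "n \<in> {n. infinite {m. (n, m) \<in> X \<union> Y}}"
      moreover have "{m. (n, m) \<in> X \<union> Y} = {m. (n, m) \<in> X} \<union> {m. (n, m) \<in> Y}" by auto
      ultimately show "n \<in> {n. infinite {m. (n, m) \<in> X}} \<union> {n. infinite {m. (n, m) \<in> Y}}" by auto
    qed
    thus ?thesis using that finite_subset unfolding FinFin_def by blast
  qed
  show "(\<lambda>(n,m). map (\<lambda>i. i < n) [0..<m]) -` S_set A \<in> FinFin" if "infinite A" for A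
  proof -
    obtain a0 where a0: "a0 \<in> A" using \<open>infinite A\<close> by (metis finite.emptyI equals0I)
    have "{n. infinite {m. (n, m) \<in> (\<lambda>(n,m). map (\<lambda>i. i < n) [0..<m]) -` S_set A}} \<subseteq> {..a0}"
    proof
      fix n assume "n \<in> {n. infinite {m. (n, m) \<in> (\<lambda>(n,m). map (\<lambda>i. i < n) [0..<m]) -` S_set A}}"
      hence inf: "infinite {m. map (\<lambda>i. i < n) [0..<m] \<in> S_set A}" by simp
      show "n \<in> {..a0}"
      proof (rule ccontr)
        assume "n \<notin> {..a0}" hence na: "a0 < n" by simp
        obtain a where a: "a \<in> A" "a \<ge> n"
          using \<open>infinite A\<close> by (metis infinite_nat_iff_unbounded_le)
        obtain m where m: "m > a" "map (\<lambda>i. i < n) [0..<m] \<in> S_set A"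
          using inf by (metis (mono_tags, lifting) infinite_nat_iff_unbounded mem_Collect_eq)
        then obtain c where c: "\<forall>b\<in>A. b < m \<longrightarrow> map (\<lambda>i. i < n) [0..<m] ! b = c"
          unfolding S_set_def by auto
        have "c = True" using c a0 na a m(1) by auto
        moreover have "c = False" using c a m(1) by auto
        ultimately show False by simp
      qed
    qed
    thus ?thesis unfolding FinFin_def using finite_subset by blast
  qed
qed

theorem mainTheorem6:
  shows "katetov_le Spl trE \<and> katetov_le Spl FinFin"
  using part1 part2 by blast

end
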